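(* Let $m,k$ be natural numbers. If the leading term in the hereditary representation in base $k+1$ of the $k$-th term $G(k,m)$ of the Goodstein sequence $G(m)$ is of the form $a_l\cdot(k+1)^{l}$ with $1<a_l<k+1$, then $G(k+1,m)>G(k,m)$ if $l\ge 1$, and $G(k+1,m)<G(k,m)$ if $l=0$.
   Context: For a natural number base $b>1$, the hereditary representation $m\langle b\rangle$ of $m$ is $\sum_{i=0}^{l} a_i b^{i}$ with $0\le a_i<b$, $a_l\ne0$, each exponent itself written in hereditary representation in base $b$, recursively; its leading term is $a_l b^{l}$. $m\langle b\rangle''$ is obtained by syntactically replacing every $b$ by $b+1$ in $m\langle b\rangle$. The Goodstein sequence $G(m)=\{m, m''-1, (m''-1)''-1,\dots\}$ starts from $m$ in base $2$; its $n$-th term is $G(n,m)$, with $G(1,m)=m$ in base $2$, $G(k,m)$ written in base $k+1$, and $G(k+1,m)=G(k,m)\langle k+1\rangle''-1$. *)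

theory Defs
  imports Main
begin

text \<open>Hereditary base change: write n in hereditary base-b representation
  n = sum_i a_i * b^i (digits a_i = n div b^i mod b, exponents i themselves
  hereditarily represented) and syntactically replace b by b+1.
  Only indices i < n can carry nonzero digits (since b^i > i), so the sum
  ranges over i < n.\<close>
function bump :: "nat \<Rightarrow> nat \<Rightarrow> nat" where
  "bump b n = (if b < 2 then n else
     (\<Sum>i<n. (n div b ^ i mod b) * (b + 1) ^ bump b i))"
  by auto
termination by (relation "measure snd") auto

text \<open>Goodstein sequence: goodstein 1 m = m (base 2), and
  goodstein (k+1) m = bump (k+1) (goodstein k m) - 1 for k >= 1
  (goodstein k m is written in base k+1). The value at index 0 is a dummy.\<close>
fun goodstein :: "nat \<Rightarrow> nat \<Rightarrow> nat" where
  "goodstein 0 m = m"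
| "goodstein (Suc k) m = (if k = 0 then m else bump (k + 1) (goodstein k m) - 1)"

end

theory Submission
  imports Defs
begin

declare bump.simps[simp del]

lemma lt_pow: "(b::nat) \<ge> 2 \<Longrightarrow> n < b ^ n"
proof -
  assume "b \<ge> 2"
  then have "(2::nat) ^ n \<le> b ^ n" by (rule power_mono) simp
  moreover have "n < 2 ^ n" by (rule less_exp)
  ultimately show ?thesis by linarith
qed

lemma pow_le2: "i \<le> j \<Longrightarrow> (b::nat) \<ge> 2 \<Longrightarrow> b ^ i \<le> (b+1) ^ j"
proof -
  assume "i \<le> j" "b \<ge> 2"
  have "b ^ i \<le> (b+1) ^ i" by (rule power_mono) simp_all
  also have "\<dots> \<le> (b+1) ^ j" using \<open>i \<le> j\<close> by (rule power_increasing) simp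
  finally show ?thesis .
qed

lemma digits_sum:
  fixes b :: nat
  assumes "b \<ge> 2"
  shows "n < b ^ N \<Longrightarrow> n = (\<Sum>i<N. (n div b ^ i mod b) * b ^ i)"
proof (induction N arbitrary: n)
  case 0
  then show ?case by simp
next
  case (Suc N)
  have h: "n div b < b ^ N" using Suc.prems assms
    by (simp add: div_less_iff_less_mult mult.commute)
  have IH: "n div b = (\<Sum>i<N. (n div b div b ^ i mod b) * b ^ i)" using Suc.IH[OF h] .
  have "(\<Sum>i<Suc N. (n div b ^ i mod b) * b ^ i)
      = n mod b + (\<Sum>i<N. (n div b ^ Suc i mod b) * b ^ Suc i)"
    unfolding sum.lessThan_Suc_shift by simp
  also have "(\<Sum>i<N. (n div b ^ Suc i mod b) * b ^ Suc i)
      = b * (\<Sum>i<N. (n div b div b ^ i mod b) * b ^ i)"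
    by (simp add: sum_distrib_left div_mult2_eq mult.assoc mult.left_commute)
  also have "n mod b + b * (\<Sum>i<N. (n div b div b ^ i mod b) * b ^ i) = n"
    using IH by simp
  finally show ?case by simp
qed

lemma bump_eq: "b \<ge> 2 \<Longrightarrow> bump b n = (\<Sum>i<n. (n div b ^ i mod b) * (b + 1) ^ bump b i)"
  by (subst bump.simps) simp

lemma bump_ge: "b \<ge> 2 \<Longrightarrow> n \<le> bump b n"
proof (induction n rule: less_induct)
  case (less n)
  have lt: "n < b ^ n" using less.prems by (rule lt_pow)
  have "n = (\<Sum>i<n. (n div b ^ i mod b) * b ^ i)" using digits_sum[OF less.prems lt] .
  also have "\<dots> \<le> (\<Sum>i<n. (n div b ^ i mod b) * (b + 1) ^ bump b i)"
  proof (rule sum_mono)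
    fix i assume "i \<in> {..<n}"
    then have "i \<le> bump b i" using less by simp
    then have "b ^ i \<le> (b+1) ^ bump b i" by (rule pow_le2[OF _ less.prems])
    then show "(n div b ^ i mod b) * b ^ i \<le> (n div b ^ i mod b) * (b + 1) ^ bump b i"
      by (rule mult_le_mono2)
  qed
  also have "\<dots> = bump b n" by (rule bump_eq[OF less.prems, symmetric])
  finally show ?case .
qed

theorem lemma3:
  fixes m k l a :: nat
  assumes "(k + 1) ^ l \<le> goodstein k m"
    and "goodstein k m < (k + 1) ^ Suc l"
    and "a = goodstein k m div (k + 1) ^ l"
    and "1 < a" and "a < k + 1"
  shows "(l \<ge> 1 \<longrightarrow> goodstein (k + 1) m > goodstein k m) \<and>
         (l = 0 \<longrightarrow> goodstein (k + 1) m < goodstein k m)"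
proof -
  define n where "n = goodstein k m"
  define b where "b = k + 1"
  have k0: "k \<noteq> 0" using assms by simp
  have b2: "b \<ge> 2" using k0 b_def by simp
  have G: "goodstein (k+1) m = bump b n - 1" using k0 by (simp add: n_def b_def)
  have ab: "a < b" using assms b_def by simp
  have da: "n div b ^ l mod b = a" using assms ab by (simp add: n_def b_def)
  have lt: "n < b ^ n" using b2 by (rule lt_pow)
  have ln: "l < n"
    using lt_pow[OF b2, of l] assms(1) unfolding n_def b_def by linarith
  define f where "f i = (n div b ^ i mod b) * (b + 1) ^ bump b i" for i
  define g where "g i = (n div b ^ i mod b) * b ^ i" for i
  have fg: "g i \<le> f i" for i
  proof -
    have "i \<le> bump b i" by (rule bump_ge[OF b2])
    then have "b ^ i \<le> (b+1) ^ bump b i" by (rule pow_le2[OF _ b2])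
    then show ?thesis unfolding f_def g_def by simp
  qed
  have nsum: "n = sum g {..<n}" unfolding g_def using digits_sum[OF b2 lt] .
  have bsum: "bump b n = sum f {..<n}" unfolding f_def using bump_eq[OF b2] .
  show ?thesis
  proof (intro conjI impI)
    assume l1: "1 \<le> l"
    have "b ^ l < (b+1) ^ l" using l1 by (intro power_strict_mono) auto
    moreover have "(b+1) ^ l \<le> (b+1) ^ bump b l" using bump_ge[OF b2, of l]
      by (intro power_increasing) auto
    ultimately have "b ^ l + 1 \<le> (b+1) ^ bump b l" by simp
    then have "a * (b ^ l + 1) \<le> a * (b+1) ^ bump b l" by (rule mult_le_mono2)
    moreover have "g l = a * b ^ l" unfolding g_def da by (rule refl)
    moreover have "f l = a * (b+1) ^ bump b l" unfolding f_def da by (rule refl)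
    moreover have "a * (b ^ l + 1) = a * b ^ l + a" by (simp add: distrib_left)
    ultimately have fl: "g l + 2 \<le> f l" using assms(4) by linarith
    have "sum f {..<n} = f l + sum f ({..<n} - {l})" using ln
      by (simp add: sum.remove)
    moreover have "sum g {..<n} = g l + sum g ({..<n} - {l})" using ln
      by (simp add: sum.remove)
    moreover have "sum g ({..<n} - {l}) \<le> sum f ({..<n} - {l})"
      by (rule sum_mono) (rule fg)
    ultimately have "n + 2 \<le> bump b n" using nsum bsum fl by linarith
    then show "goodstein (k + 1) m > goodstein k m" using G n_def by simp
  next
    assume l0: "l = 0"
    then have na: "n = a" using assms n_def by simp
    have "bump b n = sum f {..<n}" by (rule bsum)
    also have "\<dots> = f 0 + sum f ({..<n} - {0})" using ln l0 by (simp add: sum.remove)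
    also have "sum f ({..<n} - {0}) = 0"
    proof (rule sum.neutral, intro ballI)
      fix i assume "i \<in> {..<n} - {0}"
      then have "i \<ge> 1" by auto
      then have "b \<le> b ^ i" using b2 using power_increasing[of 1 i b] by simp
      then have "n div b ^ i = 0" using na ab by simp
      then show "f i = 0" unfolding f_def by simp
    qed
    also have "f 0 = a" unfolding f_def using na ab by (subst bump_eq[OF b2]) simp
    finally show "goodstein (k + 1) m < goodstein k m" using G n_def na assms(4) by simp
  qed
qed

end
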